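(* Let $(\mathcal T_0,\mathfrak c)$ be an $(N{+}1)$-colored initial triangulation in $\mathbb R^n$ and let $T\in\mathbb T$. Then every edge $e\in\mathcal E(T)$ with $e\ne\mathrm{bse}(T)$ satisfies $g^\sharp(e)>g^\sharp(\mathrm{bse}(T))$. More generally, for every $m$-subsimplex $S\subset T$ with $m\ge1$ and every edge $e$ of $S$ with $e\ne\mathrm{bse}(S)$, $g^\sharp(e)>g^\sharp(\mathrm{bse}(S))$.
   Context: $n\ge2$, $N\ge n$. An $(N{+}1)$-colored triangulation is a conforming triangulation $\mathcal T_0$ of a polyhedral domain in $\mathbb R^n$ with $\mathfrak c:\mathcal V(\mathcal T_0)\to\{0,\dots,N\}$ giving distinct colors to the vertices of each simplex. Each vertex $v$ has an integer generation $g(v)$, with level $\ell(v)\in\mathbb Z$ and type $t(v)\in\{1,\dots,N\}$ defined by $g(v)=N(\ell(v)-1)+t(v)$; initial vertices have $g(v)=-\mathfrak c(v)$. For an $m$-simplex $S=[v_0,\dots,v_m]$ ($1\le m\le n$) with $g(v_0)>\dots>g(v_m)$: if $\ell(v_m)\ne\ell(v_{m-1})$ then $\mathrm{bse}(S)=[v_{m-1},v_m]$ and the midpoint $\mathrm{bsv}(S)$ has generation $g(v_{m-1})+N$; otherwise, with $j=\min\{k:\ell(v_k)=\ell(v_m)\}$, $\mathrm{bse}(S)=[v_j,v_m]$ and $g(\mathrm{bsv}(S))=g(v_m)+2N+1-t(v_j)$. Define $g^\sharp(S)=g(\mathrm{bsv}(S))$ (in particular for edges, $m=1$). Bisecting an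 $n$-simplex replaces one endpoint of its bisection edge by the midpoint, producing two children. $\mathrm{Refine}(\mathcal T,T)$: with $e=\mathrm{bse}(T)$ and $\omega(e)$ the simplices containing edge $e$, if some $T'\in\omega(e)$ has $\mathrm{bse}(T')\ne e$ return $\mathrm{Refine}(\mathrm{Refine}(\mathcal T,T'),T)$, else bisect all of $\omega(e)$. $\mathbb T$ is the set of all simplices in triangulations obtained from $\mathcal T_0$ by finitely many refinements. $\mathcal E(T)$ is the edge set of $T$. *)

theory Defs
  imports "HOL-Analysis.Analysis"
begin

text \<open>Level and type of a generation k:  k = N (lev - 1) + typ  with  typ in 1..N.\<close>
definition lev :: "nat \<Rightarrow> int \<Rightarrow> int" where
  "lev N k = (k - 1) div int N + 1"

definition vtype :: "nat \<Rightarrow> int \<Rightarrow> int" where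
  "vtype N k = (k - 1) mod int N + 1"

definition gen_order :: "('a \<Rightarrow> int) \<Rightarrow> 'a set \<Rightarrow> 'a list" where
  "gen_order g S = (SOME vs. set vs = S \<and> distinct vs \<and> sorted_wrt (\<lambda>x y. g y < g x) vs)"

definition bse :: "nat \<Rightarrow> ('a \<Rightarrow> int) \<Rightarrow> 'a set \<Rightarrow> 'a set" where
  "bse N g S = (let vs = gen_order g S; m = length vs - 1 in
     if lev N (g (vs ! m)) \<noteq> lev N (g (vs ! (m - 1))) then {vs ! (m - 1), vs ! m}
     else {vs ! (LEAST k. lev N (g (vs ! k)) = lev N (g (vs ! m))), vs ! m})"

text \<open>g-sharp(S): the generation of the bisection vertex bsv(S).\<close>
definition gsharp :: "nat \<Rightarrow> ('a \<Rightarrow> int) \<Rightarrow> 'a set \<Rightarrow> int" where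
  "gsharp N g S = (let vs = gen_order g S; m = length vs - 1 in
     if lev N (g (vs ! m)) \<noteq> lev N (g (vs ! (m - 1))) then g (vs ! (m - 1)) + int N
     else g (vs ! m) + 2 * int N + 1
            - vtype N (g (vs ! (LEAST k. lev N (g (vs ! k)) = lev N (g (vs ! m))))))"

text \<open>Conforming triangulation of a polyhedral domain in R^n (n = DIM('a)); simplices are
  represented by their vertex sets.\<close>
definition conforming_triangulation :: "'a::euclidean_space set set \<Rightarrow> bool" where
  "conforming_triangulation \<T> \<longleftrightarrow>
     finite \<T> \<and> \<T> \<noteq> {} \<and>
     (\<forall>T\<in>\<T>. finite T \<and> card T = DIM('a) + 1 \<and> \<not> affine_dependent T) \<and>
     (\<forall>T1\<in>\<T>. \<forall>T2\<in>\<T>. convex hull T1 \<inter> convex hull T2 = convex hull (T1 \<inter> T2)) \<and>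
     (\<exists>\<Omega>. open \<Omega> \<and> connected \<Omega> \<and> bounded \<Omega> \<and>
          closure \<Omega> = \<Union>((\<lambda>T. convex hull T) ` \<T>))"

definition colored_triangulation ::
    "nat \<Rightarrow> 'a::euclidean_space set set \<Rightarrow> ('a \<Rightarrow> nat) \<Rightarrow> bool" where
  "colored_triangulation N \<T> c \<longleftrightarrow>
     conforming_triangulation \<T> \<and> (\<forall>v\<in>\<Union>\<T>. c v \<le> N) \<and> (\<forall>T\<in>\<T>. inj_on c T)"

definition patch :: "'a set set \<Rightarrow> 'a set \<Rightarrow> 'a set set" where
  "patch \<T> e = {T \<in> \<T>. e \<subseteq> T}"

definition bisect_all :: "'a::real_vector set set \<Rightarrow> 'a \<Rightarrow> 'a \<Rightarrow> 'a set set" where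
  "bisect_all \<T> a b = (\<T> - patch \<T> {a, b}) \<union>
     (\<Union>T\<in>patch \<T> {a, b}. {insert (midpoint a b) (T - {a}), insert (midpoint a b) (T - {b})})"

text \<open>A state is a triangulation together with the generation function on points.
  refines N s T s' means: the recursive call Refine(s, T) terminates with result s'.\<close>
inductive refines :: "nat \<Rightarrow> 'a::real_vector set set \<times> ('a \<Rightarrow> int) \<Rightarrow> 'a set
                        \<Rightarrow> 'a set set \<times> ('a \<Rightarrow> int) \<Rightarrow> bool" for N where
  bisect: "\<lbrakk> T \<in> \<T>; bse N g T = {a, b}; a \<noteq> b;
            \<forall>T'\<in>patch \<T> (bse N g T). bse N g T' = bse N g T \<rbrakk>
           \<Longrightarrow> refines N (\<T>, g) T (bisect_all \<T> a b, g(midpoint a b := gsharp N g T))"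
| recurse: "\<lbrakk> T \<in> \<T>; T' \<in> patch \<T> (bse N g T); bse N g T' \<noteq> bse N g T;
             refines N (\<T>, g) T' s1; refines N s1 T s2 \<rbrakk>
           \<Longrightarrow> refines N (\<T>, g) T s2"

inductive reachable :: "nat \<Rightarrow> 'a::real_vector set set \<Rightarrow> ('a \<Rightarrow> nat)
                          \<Rightarrow> 'a set set \<times> ('a \<Rightarrow> int) \<Rightarrow> bool" for N \<T>0 c where
  init: "reachable N \<T>0 c (\<T>0, \<lambda>v. - int (c v))"
| step: "\<lbrakk> reachable N \<T>0 c (\<T>, g); T \<in> \<T>; refines N (\<T>, g) T s \<rbrakk>
         \<Longrightarrow> reachable N \<T>0 c s"

end

theory Submission
  imports Defs
begin

lemma gen_order_ex:
  fixes g :: "'a \<Rightarrow> int"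
  assumes "finite S" "inj_on g S"
  shows "\<exists>vs. set vs = S \<and> distinct vs \<and> sorted_wrt (\<lambda>x y. g y < g x) vs"
proof -
  let ?h = "the_inv_into S g"
  let ?ys = "rev (sorted_list_of_set (g ` S))"
  have fin: "finite (g ` S)" using assms by simp
  have s1: "set ?ys = g ` S" using fin by simp
  have d1: "distinct ?ys" by simp
  have so1: "sorted_wrt (\<lambda>x y. y < x) ?ys"
    using strict_sorted_list_of_set[of "g ` S"] by (simp add: sorted_wrt_rev)
  have hinv: "\<And>a. a \<in> g ` S \<Longrightarrow> g (?h a) = a"
    using assms(2) by (simp add: f_the_inv_into_f)
  have hin: "inj_on ?h (g ` S)"
    using assms(2) inj_on_the_inv_into by blast
  have "set (map ?h ?ys) = S"
    using s1 assms(2) by (simp add: the_inv_into_onto)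
  moreover have "distinct (map ?h ?ys)"
    using d1 hin s1 by (simp add: distinct_map)
  moreover have "sorted_wrt (\<lambda>x y. g y < g x) (map ?h ?ys)"
    unfolding sorted_wrt_map
    by (rule sorted_wrt_mono_rel[OF _ so1]) (use fin hinv in auto)
  ultimately show ?thesis by blast
qed

lemma gen_order_props:
  fixes g :: "'a \<Rightarrow> int"
  assumes "finite S" "inj_on g S"
  shows "set (gen_order g S) = S \<and> distinct (gen_order g S)
         \<and> sorted_wrt (\<lambda>x y. g y < g x) (gen_order g S)"
  unfolding gen_order_def using someI_ex[OF gen_order_ex[OF assms]] .

lemma gen_order_cong:
  assumes "\<And>x. x \<in> S \<Longrightarrow> g' x = g x"
  shows "gen_order g' S = gen_order g S"
proof -
  have "(\<lambda>vs. set vs = S \<and> distinct vs \<and> sorted_wrt (\<lambda>x y. g' y < g' x) vs)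
      = (\<lambda>vs. set vs = S \<and> distinct vs \<and> sorted_wrt (\<lambda>x y. g y < g x) vs)"
  proof (rule ext)
    fix vs show "(set vs = S \<and> distinct vs \<and> sorted_wrt (\<lambda>x y. g' y < g' x) vs)
      = (set vs = S \<and> distinct vs \<and> sorted_wrt (\<lambda>x y. g y < g x) vs)"
    proof (cases "set vs = S")
      case True
      have "sorted_wrt (\<lambda>x y. g' y < g' x) vs = sorted_wrt (\<lambda>x y. g y < g x) vs"
        using sorted_wrt_mono_rel[of vs "\<lambda>x y. g' y < g' x" "\<lambda>x y. g y < g x"]
          sorted_wrt_mono_rel[of vs "\<lambda>x y. g y < g x" "\<lambda>x y. g' y < g' x"] True assms
        by auto
      then show ?thesis by simp
    qed simp
  qed
  then show ?thesis unfolding gen_order_def by simp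
qed


lemma lev_vtype: "0 < N \<Longrightarrow> k = int N * (lev N k - 1) + vtype N k"
  unfolding lev_def vtype_def by simp

lemma vtype_bounds: "0 < N \<Longrightarrow> 1 \<le> vtype N k \<and> vtype N k \<le> int N"
  unfolding vtype_def by (simp add: pos_mod_bound pos_mod_sign add1_zle_eq)

lemma lev_mono: "p \<le> q \<Longrightarrow> 0 < N \<Longrightarrow> lev N p \<le> lev N q"
  unfolding lev_def by (simp add: zdiv_mono1)

lemma same_lev: "0 < N \<Longrightarrow> lev N p = lev N q \<Longrightarrow> q - p = vtype N q - vtype N p"
  using lev_vtype[of N p] lev_vtype[of N q] by (smt (verit))

lemma lev_lt: assumes "0 < N" "lev N p < lev N q"
  shows "p + int N + 1 - vtype N p \<le> q"
proof -
  have "int N * lev N p \<le> int N * (lev N q - 1)"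
    using assms by (intro mult_left_mono) auto
  then show ?thesis using lev_vtype[of N p] lev_vtype[of N q] vtype_bounds[of N q] assms
    by (simp add: algebra_simps)
qed

lemma Least_cong_bound:
  assumes "P m" "\<And>k. k \<le> m \<Longrightarrow> P k = Q k"
  shows "(LEAST k::nat. P k) = (LEAST k. Q k)"
proof -
  have qm: "Q m" using assms by auto
  have a: "(LEAST k. P k) \<le> m" using assms(1) by (rule Least_le)
  have b: "(LEAST k. Q k) \<le> m" using qm by (rule Least_le)
  have "P (LEAST k. P k)" using assms(1) by (rule LeastI)
  then have "Q (LEAST k. P k)" using assms(2) a by auto
  then have c: "(LEAST k. Q k) \<le> (LEAST k. P k)" by (rule Least_le)
  have "Q (LEAST k. Q k)" using qm by (rule LeastI)
  then have "P (LEAST k. Q k)" using assms(2) b by auto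
  then have "(LEAST k. P k) \<le> (LEAST k. Q k)" by (rule Least_le)
  with c show ?thesis by simp
qed

lemma vs_facts:
  fixes g :: "'a \<Rightarrow> int"
  assumes "finite S" "inj_on g S"
  defines "vs \<equiv> gen_order g S"
  shows "length vs = card S" "\<And>i j. i < j \<Longrightarrow> j < length vs \<Longrightarrow> g (vs ! j) < g (vs ! i)"
    "\<And>k. k < length vs \<Longrightarrow> vs ! k \<in> S" "\<And>x. x \<in> S \<Longrightarrow> \<exists>k < length vs. vs ! k = x"
    "distinct vs"
proof -
  note P = gen_order_props[OF assms(1,2), folded vs_def]
  show "length vs = card S" using P distinct_card by fastforce
  show "\<And>i j. i < j \<Longrightarrow> j < length vs \<Longrightarrow> g (vs ! j) < g (vs ! i)"
    using P sorted_wrt_nth_less by fastforce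
  show "\<And>k. k < length vs \<Longrightarrow> vs ! k \<in> S" using P nth_mem by blast
  show "\<And>x. x \<in> S \<Longrightarrow> \<exists>k < length vs. vs ! k = x" using P by (metis in_set_conv_nth)
  show "distinct vs" using P by blast
qed

lemma bse_gsharp_cong:
  fixes g :: "'a \<Rightarrow> int"
  assumes "finite S" "inj_on g S" "2 \<le> card S" "\<And>x. x \<in> S \<Longrightarrow> g' x = g x"
  shows "bse N g' S = bse N g S \<and> gsharp N g' S = gsharp N g S"
proof -
  define vs where "vs = gen_order g S"
  have vs': "gen_order g' S = vs" unfolding vs_def by (rule gen_order_cong) (use assms in auto)
  note F = vs_facts[OF assms(1,2), folded vs_def]
  define m where "m = length vs - 1"
  have ml: "m < length vs" "m - 1 < length vs" using F(1) assms(3) unfolding m_def by auto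
  have eq: "\<And>k. k \<le> m \<Longrightarrow> g' (vs ! k) = g (vs ! k)"
    using ml F(3) assms(4) by (meson le_less_trans)
  define j0 where "j0 = (LEAST k. lev N (g (vs ! k)) = lev N (g (vs ! m)))"
  have L: "(LEAST k. lev N (g' (vs ! k)) = lev N (g' (vs ! m))) = j0"
    unfolding j0_def by (rule Least_cong_bound[where m = m]) (use eq in auto)
  have Lm: "j0 \<le> m" unfolding j0_def
    by (rule Least_le) simp
  have e1: "g' (vs ! m) = g (vs ! m)" "g' (vs ! (m - 1)) = g (vs ! (m - 1))" "g' (vs ! j0) = g (vs ! j0)"
    using eq[OF order.refl] eq[of "m - 1"] eq[OF Lm] by auto
  show ?thesis
    unfolding bse_def gsharp_def Let_def vs' vs_def[symmetric] m_def[symmetric] L j0_def[symmetric]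
    unfolding e1 by simp
qed


definition gs2 :: "nat \<Rightarrow> int \<Rightarrow> int \<Rightarrow> int" where
  "gs2 N p q = (if lev N q \<noteq> lev N p then p + int N else q + 2 * int N + 1 - vtype N p)"

lemma edge_order:
  fixes g :: "'a \<Rightarrow> int"
  assumes "g y < g x"
  shows "gen_order g {x, y} = [x, y]"
proof -
  have xy: "x \<noteq> y" using assms by auto
  have inj: "inj_on g {x, y}" using assms by (auto simp: inj_on_def)
  define vs where "vs = gen_order g {x, y}"
  note P = gen_order_props[OF _ inj, folded vs_def]
  have "length vs = 2" using P xy distinct_card[of vs] by fastforce
  then obtain u w where vs: "vs = [u, w]"
    by (metis (no_types, opaque_lifting) One_nat_def Suc_1 length_0_conv length_Suc_conv)
  have "{u, w} = {x, y}" "g w < g u" using P vs by auto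
  then have "u = x \<and> w = y" using assms xy by (metis doubleton_eq_iff less_asym)
  then show ?thesis using vs vs_def by simp
qed

lemma edge_bse_gsharp:
  fixes g :: "'a \<Rightarrow> int"
  assumes "g y < g x"
  shows "bse N g {x, y} = {x, y} \<and> gsharp N g {x, y} = gs2 N (g x) (g y)"
proof -
  have L: "(LEAST k. lev N (g ([x, y] ! k)) = lev N (g y)) = 0"
    if "lev N (g y) = lev N (g x)" using that by (intro Least_eq_0) simp
  show ?thesis
    unfolding bse_def gsharp_def Let_def edge_order[of g y x, OF assms] gs2_def
    using L by auto
qed


lemma bse_basic:
  fixes g :: "'a \<Rightarrow> int"
  assumes "finite S" "inj_on g S" "2 \<le> card S"
  shows "bse N g S \<subseteq> S \<and> card (bse N g S) = 2 \<and> gsharp N g (bse N g S) = gsharp N g S"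
proof -
  define vs where "vs = gen_order g S"
  note F = vs_facts[OF assms(1,2), folded vs_def]
  define m where "m = length vs - 1"
  have m1: "1 \<le> m" "m < length vs" using F(1) assms(3) unfolding m_def by auto
  define j0 where "j0 = (LEAST k. lev N (g (vs ! k)) = lev N (g (vs ! m)))"
  have bse_eq: "bse N g S = (if lev N (g (vs ! m)) \<noteq> lev N (g (vs ! (m - 1))) then {vs ! (m - 1), vs ! m}
         else {vs ! j0, vs ! m})"
    unfolding bse_def Let_def vs_def[symmetric] m_def[symmetric] j0_def[symmetric] by simp
  have gs_eq: "gsharp N g S = (if lev N (g (vs ! m)) \<noteq> lev N (g (vs ! (m - 1))) then g (vs ! (m - 1)) + int N
         else g (vs ! m) + 2 * int N + 1 - vtype N (g (vs ! j0)))"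
    unfolding gsharp_def Let_def vs_def[symmetric] m_def[symmetric] j0_def[symmetric] by simp
  show ?thesis
  proof (cases "lev N (g (vs ! m)) \<noteq> lev N (g (vs ! (m - 1)))")
    case True
    have lt: "g (vs ! m) < g (vs ! (m - 1))" using F(2)[of "m - 1" m] m1 by auto
    have ne: "vs ! (m - 1) \<noteq> vs ! m" using lt by auto
    show ?thesis using True bse_eq gs_eq edge_bse_gsharp[of g "vs ! m" "vs ! (m - 1)" N, OF lt]
      F(3) m1 ne unfolding gs2_def by auto
  next
    case False
    have j0m: "j0 \<le> m - 1" unfolding j0_def using False by (intro Least_le) simp
    have j0l: "lev N (g (vs ! j0)) = lev N (g (vs ! m))" unfolding j0_def by (rule LeastI[of _ m]) simp
    have lt: "g (vs ! m) < g (vs ! j0)" using F(2)[of j0 m] m1 j0m by auto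
    have ne: "vs ! j0 \<noteq> vs ! m" using lt by auto
    show ?thesis using False bse_eq gs_eq edge_bse_gsharp[of g "vs ! m" "vs ! j0" N, OF lt]
      F(3) m1 ne j0m j0l unfolding gs2_def by auto
  qed
qed


lemma P1:
  fixes g :: "'a \<Rightarrow> int"
  assumes "finite S" "inj_on g S" "2 \<le> card S" "0 < N"
    and "e \<subseteq> S" "card e = 2" "e \<noteq> bse N g S"
  shows "gsharp N g (bse N g S) < gsharp N g e"
proof -
  define vs where "vs = gen_order g S"
  note F = vs_facts[OF assms(1,2), folded vs_def]
  define m where "m = length vs - 1"
  have m1: "1 \<le> m" "m < length vs" using F(1) assms(3) unfolding m_def by auto
  define G where "G = (\<lambda>k. g (vs ! k))"
  have Gmono: "\<And>i j. i < j \<Longrightarrow> j \<le> m \<Longrightarrow> G j < G i" using F(2) m1 unfolding G_def by fastforce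
  have Gmono': "\<And>i j. i \<le> j \<Longrightarrow> j \<le> m \<Longrightarrow> G j \<le> G i"
    using Gmono by (metis order.order_iff_strict order.strict_implies_order)
  define j0 where "j0 = (LEAST k. lev N (G k) = lev N (G m))"
  have bse_eq: "bse N g S = (if lev N (G m) \<noteq> lev N (G (m - 1)) then {vs ! (m - 1), vs ! m}
         else {vs ! j0, vs ! m})"
    unfolding bse_def Let_def vs_def[symmetric] m_def[symmetric] G_def j0_def by simp
  have gs_eq: "gsharp N g S = (if lev N (G m) \<noteq> lev N (G (m - 1)) then G (m - 1) + int N
         else G m + 2 * int N + 1 - vtype N (G j0))"
    unfolding gsharp_def Let_def vs_def[symmetric] m_def[symmetric] G_def j0_def by simp
  have gsb: "gsharp N g (bse N g S) = gsharp N g S" using bse_basic[OF assms(1-3)] by blast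
  obtain x y where xy: "e = {x, y}" "x \<noteq> y" using assms(6) by (meson card_2_iff)
  obtain i' where i': "i' < length vs" "vs ! i' = x" using F(4) xy assms(5) by blast
  obtain j' where j': "j' < length vs" "vs ! j' = y" using F(4) xy assms(5) by blast
  have "i' \<noteq> j'" using i' j' xy by auto
  then obtain i j where ij: "i < j" "j \<le> m" "e = {vs ! i, vs ! j}"
  proof (cases "i' < j'")
    case True then show ?thesis using that[of i' j'] i' j' xy m_def by auto
  next
    case False then show ?thesis using that[of j' i'] i' j' xy m_def \<open>i' \<noteq> j'\<close> by (auto simp: insert_commute)
  qed
  have lt: "g (vs ! j) < g (vs ! i)" using Gmono ij unfolding G_def by auto
  have gse: "gsharp N g e = gs2 N (G i) (G j)"
    using edge_bse_gsharp[of g "vs ! j" "vs ! i" N, OF lt] ij unfolding G_def by simp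
  have dist: "\<And>k l. k \<le> m \<Longrightarrow> l \<le> m \<Longrightarrow> vs ! k = vs ! l \<longleftrightarrow> k = l"
    using F(5) m1 nth_eq_iff_index_eq by (metis le_less_trans)
  note tb = vtype_bounds[OF assms(4)]
  note lm = lev_mono[OF _ assms(4)]
  show ?thesis
  proof (cases "lev N (G m) \<noteq> lev N (G (m - 1))")
    case A: True
    have nij: "\<not> (i = m - 1 \<and> j = m)" using A bse_eq ij assms(7) by auto
    show ?thesis
    proof (cases "lev N (G j) \<noteq> lev N (G i)")
      case True
      have "i < m - 1" using nij ij by auto
      then have "G (m - 1) < G i" using Gmono m1 by auto
      then show ?thesis using True A gse gs_eq gsb unfolding gs2_def by simp
    next
      case False
      have "j \<noteq> m"
      proof
        assume jm: "j = m"
        have "lev N (G (m - 1)) \<le> lev N (G i)" using lm[OF Gmono'[of i "m - 1"]] ij m1 by auto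
        moreover have "lev N (G m) \<le> lev N (G (m - 1))" using lm[OF Gmono'[of "m - 1" m]] m1 by auto
        ultimately show False using A False jm by auto
      qed
      then have "G (m - 1) \<le> G j" using Gmono' ij by auto
      then show ?thesis using False A gse gs_eq gsb tb[of "G i"] unfolding gs2_def by simp
    qed
  next
    case B: False
    have j0m: "j0 \<le> m - 1" unfolding j0_def using B by (intro Least_le) simp
    have j0l: "lev N (G j0) = lev N (G m)" unfolding j0_def by (rule LeastI[of _ m]) simp
    have bj0: "\<And>k. k < j0 \<Longrightarrow> lev N (G k) \<noteq> lev N (G m)"
      unfolding j0_def by (rule not_less_Least)
    have nij: "\<not> (i = j0 \<and> j = m)" using B bse_eq ij assms(7) by auto
    have tj0: "vtype N (G m) < vtype N (G j0)"
    proof -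
      have "j0 < m" using j0m m1 by auto
      then have "G m < G j0" using Gmono by auto
      then show ?thesis using same_lev[OF assms(4) j0l] by auto
    qed
    have lvm: "\<And>k. k \<le> m \<Longrightarrow> lev N (G m) \<le> lev N (G k)" using lm Gmono' by blast
    show ?thesis
    proof (cases "lev N (G j) = lev N (G i)")
      case True
      show ?thesis
      proof (cases "lev N (G j) = lev N (G m)")
        case True2: True
        have ij0: "j0 \<le> i" using bj0 True True2 by (metis not_le)
        have li: "lev N (G i) = lev N (G j0)" using True True2 j0l by simp
        have ti: "vtype N (G i) \<le> vtype N (G j0)"
          using same_lev[OF assms(4) li] Gmono'[OF ij0] ij by auto
        have str: "vtype N (G i) < vtype N (G j0) \<or> G m < G j"
        proof (cases "i = j0")
          case True then have "j < m" using nij ij by auto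
          then show ?thesis using Gmono by auto
        next
          case False then have "G i < G j0" using Gmono ij0 ij by auto
          then show ?thesis using same_lev[OF assms(4) li] by auto
        qed
        have "G m \<le> G j" using Gmono' ij by auto
        then show ?thesis using B True gse gs_eq gsb ti str unfolding gs2_def by auto
      next
        case False
        then have "lev N (G m) < lev N (G j)" using lvm[of j] ij by auto
        then have "G m + int N + 1 - vtype N (G m) \<le> G j" by (rule lev_lt[OF assms(4)])
        then show ?thesis using B True gse gs_eq gsb tb[of "G i"] tj0 unfolding gs2_def by auto
      qed
    next
      case False
      have "lev N (G j) \<le> lev N (G i)" using lm[OF Gmono'[of i j]] ij by auto
      then have "lev N (G m) < lev N (G i)" using False lvm[of j] ij by auto
      then have "G m + int N + 1 - vtype N (G m) \<le> G i" by (rule lev_lt[OF assms(4)])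
      then show ?thesis using B False gse gs_eq gsb tj0 unfolding gs2_def by auto
    qed
  qed
qed

lemma gs2_gt: assumes "0 < N" "q < p" shows "p < gs2 N p q"
proof (cases "lev N q = lev N p")
  case True
  then show ?thesis using same_lev[OF assms(1) True] vtype_bounds[OF assms(1), of p]
      vtype_bounds[OF assms(1), of q] unfolding gs2_def by auto
qed (auto simp: gs2_def assms)

lemma child_comb:
  fixes g :: "'a \<Rightarrow> int"
  assumes N: "0 < N" and T: "finite T" "inj_on g T" "2 \<le> card T"
    and J: "\<forall>v\<in>T. g v < gsharp N g T"
    and a: "a \<in> bse N g T" and mm: "mm \<notin> T"
    and g': "g' = g(mm := gsharp N g T)"
    and C: "C = insert mm (T - {a})"
  shows "finite C \<and> 2 \<le> card C \<and> inj_on g' C \<and> (\<forall>v\<in>C. g' v < gsharp N g' C)"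
proof -
  define s where "s = gsharp N g T"
  have aT: "a \<in> T" using a bse_basic[OF T] by blast
  have finC: "finite C" using C T by simp
  have cardC: "card C = card T" using C mm aT T
    by (simp add: card.insert_remove)
  have g'T: "\<And>v. v \<in> T \<Longrightarrow> g' v = g v" using g' mm by auto
  have g'm: "g' mm = s" using g' s_def by simp
  have injC: "inj_on g' C"
  proof -
    have "inj_on g' (T - {a})" using T(2) g'T by (metis (no_types, lifting) DiffD1 inj_on_cong inj_on_diff)
    moreover have "g' mm \<notin> g' ` (T - {a})" using g'T g'm J s_def by fastforce
    ultimately show ?thesis using C mm by simp
  qed
  have le_s: "\<And>v. v \<in> C \<Longrightarrow> g' v \<le> s" using C g'T g'm J s_def by fastforce
  define e where "e = bse N g' C"
  have e: "e \<subseteq> C" "card e = 2" "gsharp N g' e = gsharp N g' C"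
    using bse_basic[OF finC injC] cardC T(3) e_def by auto
  have "s < gsharp N g' e"
  proof (cases "mm \<in> e")
    case True
    obtain x y where xy: "e = {x, y}" "x \<noteq> y" using e(2) by (meson card_2_iff)
    define w where "w = (if x = mm then y else x)"
    have w: "e = {mm, w}" "w \<noteq> mm" using xy True unfolding w_def by auto
    have wT: "w \<in> T" using w e(1) C by auto
    have lt: "g' w < g' mm" using g'T[OF wT] g'm J wT s_def by auto
    have "gsharp N g' e = gs2 N (g' mm) (g' w)" using edge_bse_gsharp[of g' w mm N, OF lt] w by simp
    then show ?thesis using gs2_gt[OF N lt] g'm by simp
  next
    case False
    have eT: "e \<subseteq> T" "a \<notin> e" using e(1) C False by auto
    have fe: "finite e" using e(2) card.infinite by fastforce
    have inje: "inj_on g e" using T(2) eT inj_on_subset by blast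
    have "bse N g' e = bse N g e \<and> gsharp N g' e = gsharp N g e"
      by (rule bse_gsharp_cong[OF fe inje]) (use e(2) g'T eT in auto)
    then have "gsharp N g' e = gsharp N g e" by blast
    moreover have "e \<noteq> bse N g T" using a eT by auto
    then have "gsharp N g (bse N g T) < gsharp N g e" using P1[OF T N eT(1) e(2)] by blast
    ultimately show ?thesis using bse_basic[OF T] s_def by simp
  qed
  then show ?thesis using finC cardC T(3) injC le_s e(3) by fastforce
qed

definition bary :: "'a::real_vector set \<Rightarrow> 'a \<Rightarrow> ('a \<Rightarrow> real) \<Rightarrow> bool" where
  "bary T x u \<longleftrightarrow> (\<forall>v\<in>T. 0 \<le> u v) \<and> sum u T = 1 \<and> (\<Sum>v\<in>T. u v *\<^sub>R v) = x"

lemma conv_bary: "finite T \<Longrightarrow> x \<in> convex hull T \<longleftrightarrow> (\<exists>u. bary T x u)"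
  unfolding bary_def by (simp add: convex_hull_finite)

lemma bary_unique:
  assumes "finite T" "\<not> affine_dependent T" "bary T x u" "bary T x u'" "v \<in> T"
  shows "u v = u' v"
proof (rule ccontr)
  assume ne: "u v \<noteq> u' v"
  let ?w = "\<lambda>v. u v - u' v"
  have "sum ?w T = 0" using assms(3,4) unfolding bary_def by (simp add: sum_subtractf)
  moreover have "(\<Sum>v\<in>T. ?w v *\<^sub>R v) = 0"
    using assms(3,4) unfolding bary_def by (simp add: scaleR_diff_left sum_subtractf)
  moreover have "\<exists>v\<in>T. ?w v \<noteq> 0" using ne assms(5) by auto
  ultimately have "affine_dependent T" using affine_dependent_explicit_finite[OF assms(1)] by blast
  then show False using assms(2) by blast
qed

lemma bary_ext:
  assumes "finite T" "W \<subseteq> T" "bary W x u"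
  shows "bary T x (\<lambda>v. if v \<in> W then u v else 0)"
proof -
  have fW: "finite W" using assms finite_subset by blast
  have "W = T \<inter> W" using assms(2) by blast
  then have s1: "sum (\<lambda>v. if v \<in> W then u v else 0) T = sum u W"
    using sum.inter_restrict[OF assms(1), of u W] by simp
  have s2: "(\<Sum>v\<in>T. (if v \<in> W then u v else 0) *\<^sub>R v) = (\<Sum>v\<in>W. u v *\<^sub>R v)"
  proof -
    have "(\<Sum>v\<in>T. (if v \<in> W then u v else 0) *\<^sub>R v) = (\<Sum>v\<in>T. if v \<in> W then u v *\<^sub>R v else 0)"
      by (rule sum.cong) auto
    also have "\<dots> = (\<Sum>v\<in>W. u v *\<^sub>R v)"
      using sum.inter_restrict[OF assms(1), of "\<lambda>v. u v *\<^sub>R v" W] \<open>W = T \<inter> W\<close> by simp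
    finally show ?thesis .
  qed
  show ?thesis using assms(3) s1 s2 unfolding bary_def by auto
qed

lemma bary_restrict:
  assumes "finite T" "W \<subseteq> T" "bary T x u" "\<forall>v\<in>T - W. u v = 0"
  shows "bary W x u"
proof -
  have "sum u T = sum u W" using sum.mono_neutral_right[OF assms(1,2)] assms(4) by blast
  moreover have "(\<Sum>v\<in>T. u v *\<^sub>R v) = (\<Sum>v\<in>W. u v *\<^sub>R v)"
    using sum.mono_neutral_right[OF assms(1,2), of "\<lambda>v. u v *\<^sub>R v"] assms(4) by simp
  ultimately show ?thesis using assms(2,3) unfolding bary_def by auto
qed


lemma mid_sums:
  fixes W :: "'a::real_vector set" and mu :: "'a \<Rightarrow> real"
  assumes "finite W" "r \<in> W" "q \<in> W" "r \<noteq> q" "mm \<notin> W" "mm = midpoint r q"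
  defines "lam \<equiv> \<lambda>v. if v = r then mu mm / 2 else if v = q then mu q + mu mm / 2 else mu v"
  shows "sum mu (insert mm (W - {r})) = sum lam W"
    "(\<Sum>v\<in>insert mm (W - {r}). mu v *\<^sub>R v) = (\<Sum>v\<in>W. lam v *\<^sub>R v)"
proof -
  have mr: "mm \<noteq> r" "mm \<noteq> q" using assms(2,3,5) by auto
  have qr: "q \<in> W - {r}" using assms by auto
  have c0: "\<And>f. sum f (W - {r}) = f q + sum f (W - {r} - {q})"
    using assms(1) qr by (intro sum.remove) auto
  have c1: "\<And>f. sum f (insert mm (W - {r})) = f mm + f q + sum f (W - {r} - {q})"
    using assms(1,5) by (simp add: sum.insert c0 add.assoc)
  have c2: "sum f W = f r + f q + sum f (W - {r} - {q})" for f
  proof -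
    have "sum f W = f r + sum f (W - {r})" using assms(1,2) by (rule sum.remove)
    then show ?thesis using c0[of f] by (simp add: add.assoc)
  qed
  have eqo: "\<And>v. v \<in> W - {r} - {q} \<Longrightarrow> lam v = mu v" unfolding lam_def by auto
  have e1: "sum lam (W - {r} - {q}) = sum mu (W - {r} - {q})" using eqo by (rule sum.cong[OF refl])
  have e2: "(\<Sum>v\<in>W - {r} - {q}. lam v *\<^sub>R v) = (\<Sum>v\<in>W - {r} - {q}. mu v *\<^sub>R v)"
    using eqo by (intro sum.cong) auto
  have lr: "lam r = mu mm / 2" "lam q = mu q + mu mm / 2" unfolding lam_def using assms(4) by auto
  show "sum mu (insert mm (W - {r})) = sum lam W"
    unfolding c1 c2 e1 lr by simp
  have "mu mm *\<^sub>R mm = (mu mm / 2) *\<^sub>R r + (mu mm / 2) *\<^sub>R q"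
    unfolding assms(6) midpoint_def by (simp add: scaleR_add_right)
  then show "(\<Sum>v\<in>insert mm (W - {r}). mu v *\<^sub>R v) = (\<Sum>v\<in>W. lam v *\<^sub>R v)"
    unfolding c1[of "\<lambda>v. mu v *\<^sub>R v"] c2[of "\<lambda>v. lam v *\<^sub>R v"] e2 lr
    by (simp add: scaleR_add_left algebra_simps)
qed

lemma K1:
  fixes T :: "'a::real_vector set"
  assumes "finite T" "r \<in> T" "q \<in> T" "r \<noteq> q" "mm \<notin> T" "mm = midpoint r q"
    and "x \<in> convex hull (insert mm (T - {r}))"
  shows "\<exists>lam. bary T x lam \<and> lam r \<le> lam q"
proof -
  obtain mu where mu: "bary (insert mm (T - {r})) x mu"
    using assms(1,7) conv_bary[of "insert mm (T - {r})"] by auto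
  define lam where "lam = (\<lambda>v. if v = r then mu mm / 2 else if v = q then mu q + mu mm / 2 else mu v)"
  note S = mid_sums[OF assms(1-6), of mu, folded lam_def]
  have "bary T x lam"
    using mu S unfolding bary_def lam_def by auto
  moreover have "lam r \<le> lam q" using mu assms(3,4) unfolding lam_def bary_def by auto
  ultimately show ?thesis by blast
qed

lemma K2:
  fixes W :: "'a::real_vector set"
  assumes "finite W" "r \<in> W" "q \<in> W" "r \<noteq> q" "mm \<notin> W" "mm = midpoint r q"
    and "bary W x lam" "lam r \<le> lam q"
  shows "\<exists>mu. bary (insert mm (W - {r})) x mu \<and> mu q = lam q - lam r"
proof -
  define mu where "mu = (\<lambda>v. if v = mm then 2 * lam r else if v = q then lam q - lam r else lam v)"
  have mr: "mm \<noteq> r" "mm \<noteq> q" using assms(2,3,5) by auto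
  note S = mid_sums[OF assms(1-6), of mu]
  have eq: "\<And>v. v \<in> W \<Longrightarrow> (if v = r then mu mm / 2 else if v = q then mu q + mu mm / 2 else mu v) = lam v"
    unfolding mu_def using mr assms(5) by auto
  have s1: "sum (\<lambda>v. if v = r then mu mm / 2 else if v = q then mu q + mu mm / 2 else mu v) W = sum lam W"
    using eq by (rule sum.cong[OF refl])
  have s2: "(\<Sum>v\<in>W. (if v = r then mu mm / 2 else if v = q then mu q + mu mm / 2 else mu v) *\<^sub>R v)
      = (\<Sum>v\<in>W. lam v *\<^sub>R v)" using eq by (intro sum.cong) auto
  have nn: "\<forall>v\<in>insert mm (W - {r}). 0 \<le> mu v" using assms(2,7,8) mr unfolding mu_def bary_def by auto
  have "bary (insert mm (W - {r})) x mu"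
    using S s1 s2 assms(7) nn unfolding bary_def by auto
  then show ?thesis using mr unfolding mu_def by auto
qed


lemma mid_in_conv: "midpoint a b \<in> convex hull {a, b}"
  using midpoint_in_closed_segment[of a b] by (simp add: segment_convex_hull)

lemma mid_fresh:
  fixes T :: "'a::real_vector set"
  assumes "finite T" "\<not> affine_dependent T" "finite T2" "\<not> affine_dependent T2"
    "convex hull T \<inter> convex hull T2 \<subseteq> convex hull (T \<inter> T2)" "a \<in> T" "b \<in> T" "a \<noteq> b"
  shows "midpoint a b \<notin> T2"
proof
  assume mT2: "midpoint a b \<in> T2"
  define m where "m = midpoint a b"
  have "convex hull {a, b} \<subseteq> convex hull T" using assms(6,7) by (intro hull_mono) auto
  then have "m \<in> convex hull T" using mid_in_conv[of a b] m_def by blast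
  moreover have "m \<in> convex hull T2" using mT2 m_def by (simp add: hull_inc)
  ultimately have "m \<in> convex hull (T \<inter> T2)" using assms(5) by blast
  then obtain nu where nu: "bary (T \<inter> T2) m nu" using conv_bary[of "T \<inter> T2" m] assms(1) by auto
  have nu': "bary T m (\<lambda>v. if v \<in> T \<inter> T2 then nu v else 0)"
    using bary_ext[OF assms(1) _ nu] by blast
  have "bary {a, b} m (\<lambda>v. 1 / 2)" unfolding bary_def m_def midpoint_def using assms(8)
    by (simp add: scaleR_add_right)
  then have u': "bary T m (\<lambda>v. if v \<in> {a, b} then 1 / 2 else 0)"
    using bary_ext[OF assms(1)] assms(6,7) by blast
  have "a \<in> T2"
  proof (rule ccontr)
    assume "a \<notin> T2"
    then show False using bary_unique[OF assms(1,2) u' nu' assms(6)] by simp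
  qed
  moreover have "b \<in> T2"
  proof (rule ccontr)
    assume "b \<notin> T2"
    then show False using bary_unique[OF assms(1,2) u' nu' assms(7)] by simp
  qed
  moreover have "m \<noteq> a" "m \<noteq> b" using assms(8) m_def by auto
  ultimately have "{a, b} \<subseteq> T2 - {m}" by auto
  then have "affine hull {a, b} \<subseteq> affine hull (T2 - {m})" by (rule hull_mono)
  moreover have "m \<in> affine hull {a, b}"
    using mid_in_conv[of a b] convex_hull_subset_affine_hull[of "{a, b}"] m_def by blast
  ultimately have "affine_dependent T2" unfolding affine_dependent_def using mT2 m_def by blast
  then show False using assms(4) by blast
qed

lemma child_sub_conv:
  assumes "r \<in> T" "q \<in> T" "mm = midpoint r q"
  shows "convex hull (insert mm (T - {r})) \<subseteq> convex hull T"
proof (rule hull_minimal)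
  have "{r, q} \<subseteq> T" using assms by auto
  then have "convex hull {r, q} \<subseteq> convex hull T" by (rule hull_mono)
  then have "mm \<in> convex hull T" using mid_in_conv[of r q] assms(3) by blast
  moreover have "T \<subseteq> convex hull T" by (rule hull_subset)
  ultimately show "insert mm (T - {r}) \<subseteq> convex hull T" by blast
qed (rule convex_convex_hull)
lemma child_indep:
  fixes T :: "'a::euclidean_space set"
  assumes "finite T" "\<not> affine_dependent T" "r \<in> T" "q \<in> T" "r \<noteq> q" "mm \<notin> T" "mm = midpoint r q"
  shows "\<not> affine_dependent (insert mm (T - {r}))"
proof -
  define C where "C = insert mm (T - {r})"
  have finC: "finite C" using assms(1) C_def by simp
  have "0 < card T" using assms(1,3) card_gt_0_iff by blast
  then have cardC: "card C = card T" using assms C_def by (simp add: card.insert_remove)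
  have "affine hull {r, q} \<subseteq> affine hull T" using assms(3,4) by (intro hull_mono) auto
  then have mT: "mm \<in> affine hull T"
    using mid_in_conv[of r q] convex_hull_subset_affine_hull[of "{r, q}"] assms(7) by blast
  have h1: "affine hull C \<subseteq> affine hull T"
    by (rule hull_minimal) (use mT hull_subset[of T affine] C_def in auto)
  have rC: "r \<in> affine hull C"
  proof -
    have "mm \<in> affine hull C" "q \<in> affine hull C" using C_def assms(4,5) by (auto intro: hull_inc)
    then have "2 *\<^sub>R mm + (-1) *\<^sub>R q \<in> affine hull C"
      by (intro mem_affine[OF affine_affine_hull]) auto
    moreover have "2 *\<^sub>R mm + (-1) *\<^sub>R q = r" unfolding assms(7) midpoint_def
      by (simp add: scaleR_add_right)
    ultimately show ?thesis by simp
  qed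
  have h2: "affine hull T \<subseteq> affine hull C"
    by (rule hull_minimal) (use rC hull_subset[of C affine] C_def in auto)
  have "aff_dim C = aff_dim T" using h1 h2 aff_dim_affine_hull2[of C T] by auto
  moreover have "aff_dim T = int (card T) - 1" using assms(1,2) affine_independent_iff_card by blast
  ultimately show ?thesis using finC cardC affine_independent_iff_card[of C] C_def by simp
qed

lemma chi_child_old:
  fixes T1 :: "'a::real_vector set"
  assumes "finite T1" "\<not> affine_dependent T1" "finite T2"
    "convex hull T1 \<inter> convex hull T2 \<subseteq> convex hull (T1 \<inter> T2)"
    "r \<in> T1" "q \<in> T1" "r \<noteq> q" "mm \<notin> T1" "mm = midpoint r q" "\<not> (r \<in> T2 \<and> q \<in> T2)"
  shows "convex hull (insert mm (T1 - {r})) \<inter> convex hull T2 \<subseteq> convex hull (insert mm (T1 - {r}) \<inter> T2)"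
proof
  fix x assume x: "x \<in> convex hull (insert mm (T1 - {r})) \<inter> convex hull T2"
  define W where "W = T1 \<inter> T2"
  have fW: "finite W" using assms(1) W_def by simp
  have "x \<in> convex hull W" using x child_sub_conv[OF assms(5,6,9)] assms(4) W_def by blast
  then obtain nu where nu: "bary W x nu" using conv_bary[OF fW] by auto
  define nu' where "nu' = (\<lambda>v. if v \<in> W then nu v else 0)"
  have nu': "bary T1 x nu'" unfolding nu'_def by (rule bary_ext[OF assms(1) _ nu]) (simp add: W_def)
  obtain lam where lam: "bary T1 x lam" "lam r \<le> lam q"
    using K1[OF assms(1,5,6,7,8,9)] x by blast
  have eq: "\<And>v. v \<in> T1 \<Longrightarrow> lam v = nu' v" using bary_unique[OF assms(1,2) lam(1) nu'] by blast
  have r0: "nu' r = 0"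
  proof (cases "r \<in> W")
    case True
    then have "q \<notin> W" using assms(10) W_def by auto
    then have "nu' q = 0" unfolding nu'_def by simp
    moreover have "0 \<le> lam r" using lam(1) assms(5) unfolding bary_def by auto
    ultimately show ?thesis using lam(2) eq[OF assms(5)] eq[OF assms(6)] by simp
  next
    case False then show ?thesis unfolding nu'_def by simp
  qed
  have "bary (W - {r}) x nu'"
    by (rule bary_restrict[OF assms(1) _ nu']) (use r0 in \<open>auto simp: W_def nu'_def\<close>)
  then have "x \<in> convex hull (W - {r})" using conv_bary[of "W - {r}"] fW by auto
  moreover have "W - {r} \<subseteq> insert mm (T1 - {r}) \<inter> T2" unfolding W_def by auto
  ultimately show "x \<in> convex hull (insert mm (T1 - {r}) \<inter> T2)" using hull_mono[of "W - {r}" "insert mm (T1 - {r}) \<inter> T2" convex] by blast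
qed

lemma chi_child_child:
  fixes T1 :: "'a::real_vector set"
  assumes "finite T1" "\<not> affine_dependent T1" "finite T2" "\<not> affine_dependent T2"
    "convex hull T1 \<inter> convex hull T2 \<subseteq> convex hull (T1 \<inter> T2)"
    "r \<in> T1" "q \<in> T1" "r \<in> T2" "q \<in> T2" "r \<noteq> q" "mm \<notin> T1" "mm \<notin> T2" "mm = midpoint r q"
    "r2 = r \<or> r2 = q"
  shows "convex hull (insert mm (T1 - {r})) \<inter> convex hull (insert mm (T2 - {r2}))
     \<subseteq> convex hull (insert mm (T1 - {r}) \<inter> insert mm (T2 - {r2}))"
proof
  fix x assume x: "x \<in> convex hull (insert mm (T1 - {r})) \<inter> convex hull (insert mm (T2 - {r2}))"
  define W where "W = T1 \<inter> T2"
  have fW: "finite W" using assms(1) W_def by simp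
  have rW: "r \<in> W" "q \<in> W" "mm \<notin> W" using assms W_def by auto
  have mqr: "mm = midpoint q r" using assms(13) by (simp add: midpoint_sym)
  have x1: "x \<in> convex hull (insert mm (T1 - {r}))" and x2: "x \<in> convex hull (insert mm (T2 - {r2}))"
    using x by auto
  have "x \<in> convex hull T2"
    using x2 assms(14) child_sub_conv[OF assms(8,9,13)] child_sub_conv[OF assms(9,8) mqr] by blast
  then have "x \<in> convex hull W" using x1 child_sub_conv[OF assms(6,7,13)] assms(5) W_def by blast
  then obtain nu where nu: "bary W x nu" using conv_bary[OF fW] by auto
  have nu1: "bary T1 x (\<lambda>v. if v \<in> W then nu v else 0)"
    by (rule bary_ext[OF assms(1) _ nu]) (simp add: W_def)
  have nu2: "bary T2 x (\<lambda>v. if v \<in> W then nu v else 0)"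
    by (rule bary_ext[OF assms(3) _ nu]) (simp add: W_def)
  obtain lam where lam: "bary T1 x lam" "lam r \<le> lam q"
    using K1[OF assms(1,6,7,10,11,13) x1] by blast
  have le1: "nu r \<le> nu q"
    using bary_unique[OF assms(1,2) lam(1) nu1 assms(6)] bary_unique[OF assms(1,2) lam(1) nu1 assms(7)]
      lam(2) rW by simp
  obtain mu where mu: "bary (insert mm (W - {r})) x mu" "mu q = nu q - nu r"
    using K2[OF fW rW(1,2) assms(10) rW(3) assms(13) nu le1] by blast
  show "x \<in> convex hull (insert mm (T1 - {r}) \<inter> insert mm (T2 - {r2}))"
  proof (cases "r2 = r")
    case True
    have "x \<in> convex hull (insert mm (W - {r}))" using mu(1) conv_bary[of "insert mm (W - {r})"] fW by auto
    moreover have "insert mm (W - {r}) \<subseteq> insert mm (T1 - {r}) \<inter> insert mm (T2 - {r2})"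
      using True W_def by auto
    ultimately show ?thesis using hull_mono[of "insert mm (W - {r})" "insert mm (T1 - {r}) \<inter> insert mm (T2 - {r2})" convex] by blast
  next
    case False
    then have r2q: "r2 = q" using assms(14) by simp
    obtain lam2 where lam2: "bary T2 x lam2" "lam2 q \<le> lam2 r"
      using K1[OF assms(3,9,8) assms(10)[symmetric] assms(12) mqr] x2 r2q by blast
    have le2: "nu q \<le> nu r"
      using bary_unique[OF assms(3,4) lam2(1) nu2 assms(8)] bary_unique[OF assms(3,4) lam2(1) nu2 assms(9)]
        lam2(2) rW by simp
    have "bary (insert mm (W - {r} - {q})) x mu"
      by (rule bary_restrict[OF _ _ mu(1)]) (use fW mu(2) le1 le2 in auto)
    then have "x \<in> convex hull (insert mm (W - {r} - {q}))"
      using conv_bary[of "insert mm (W - {r} - {q})"] fW by auto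
    moreover have "insert mm (W - {r} - {q}) \<subseteq> insert mm (T1 - {r}) \<inter> insert mm (T2 - {r2})"
      using r2q W_def by auto
    ultimately show ?thesis using hull_mono[of "insert mm (W - {r} - {q})" "insert mm (T1 - {r}) \<inter> insert mm (T2 - {r2})" convex] by blast
  qed
qed

lemma init_J:
  fixes g :: "'a \<Rightarrow> int"
  assumes N: "0 < N" and T: "finite T" "inj_on g T" "2 \<le> card T"
    and bnd: "\<forall>v\<in>T. - int N \<le> g v \<and> g v \<le> 0"
  shows "\<forall>v\<in>T. g v < gsharp N g T"
proof -
  define e where "e = bse N g T"
  have e: "e \<subseteq> T" "card e = 2" "gsharp N g e = gsharp N g T"
    using bse_basic[OF T] e_def by auto
  obtain x y where xy: "e = {x, y}" "x \<noteq> y" using e(2) by (meson card_2_iff)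
  have gxy: "g x \<noteq> g y" using T(2) xy e(1) by (auto simp: inj_on_def)
  have pos: "0 < gs2 N p q" if "q < p" "- int N \<le> q" "p \<le> 0" for p q
    using vtype_bounds[OF N, of p] that unfolding gs2_def by auto
  have "0 < gsharp N g e"
  proof (cases "g y < g x")
    case True
    then have "gsharp N g e = gs2 N (g x) (g y)" using edge_bse_gsharp[of g y x N] xy by simp
    then show ?thesis using pos[OF True] bnd xy e(1) by auto
  next
    case False
    then have lt: "g x < g y" using gxy by simp
    have "e = {y, x}" using xy by auto
    then have "gsharp N g e = gs2 N (g y) (g x)" using edge_bse_gsharp[of g x y N, OF lt] by simp
    then show ?thesis using pos[OF lt] bnd xy e(1) by auto
  qed
  then show ?thesis using e(3) bnd by fastforce
qed

definition inv_st :: "nat \<Rightarrow> 'a::euclidean_space set set \<times> ('a \<Rightarrow> int) \<Rightarrow> bool" where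
  "inv_st N s \<longleftrightarrow>
     (\<forall>T\<in>fst s. finite T \<and> 2 \<le> card T \<and> \<not> affine_dependent T \<and> inj_on (snd s) T
        \<and> (\<forall>v\<in>T. snd s v < gsharp N (snd s) T))
   \<and> (\<forall>T1\<in>fst s. \<forall>T2\<in>fst s. convex hull T1 \<inter> convex hull T2 \<subseteq> convex hull (T1 \<inter> T2))"

lemma bisect_all_cases:
  assumes "X \<in> bisect_all \<T> a b"
  shows "(X \<in> \<T> \<and> \<not> (a \<in> X \<and> b \<in> X))
    \<or> (\<exists>T'\<in>\<T>. \<exists>r q. a \<in> T' \<and> b \<in> T' \<and> ((r = a \<and> q = b) \<or> (r = b \<and> q = a))
          \<and> X = insert (midpoint a b) (T' - {r}))"
  using assms unfolding bisect_all_def patch_def by auto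

lemma bisect_inv:
  fixes \<T> :: "'a::euclidean_space set set"
  assumes N: "0 < N" and inv: "inv_st N (\<T>, g)" and T: "T \<in> \<T>" and ab: "bse N g T = {a, b}" "a \<noteq> b"
    and pt: "\<forall>T'\<in>patch \<T> (bse N g T). bse N g T' = bse N g T"
  shows "inv_st N (bisect_all \<T> a b, g(midpoint a b := gsharp N g T))"
proof -
  define m where "m = midpoint a b"
  define s where "s = gsharp N g T"
  define g' where "g' = g(m := s)"
  have I1: "\<And>X. X \<in> \<T> \<Longrightarrow> finite X \<and> 2 \<le> card X \<and> \<not> affine_dependent X \<and> inj_on g X
        \<and> (\<forall>v\<in>X. g v < gsharp N g X)" using inv unfolding inv_st_def by auto
  have I2: "\<And>X Y. X \<in> \<T> \<Longrightarrow> Y \<in> \<T> \<Longrightarrow> convex hull X \<inter> convex hull Y \<subseteq> convex hull (X \<inter> Y)"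
    using inv unfolding inv_st_def by auto
  have abT: "a \<in> T" "b \<in> T" using bse_basic[of T g N] I1[OF T] ab by auto
  have fresh: "\<And>X. X \<in> \<T> \<Longrightarrow> m \<notin> X"
    unfolding m_def using I1[OF T] I1 I2[OF T] abT ab(2) by (intro mid_fresh) auto
  have bseP: "\<And>X. X \<in> \<T> \<Longrightarrow> a \<in> X \<Longrightarrow> b \<in> X \<Longrightarrow> bse N g X = {a, b}"
    using pt ab unfolding patch_def by auto
  have gsP: "\<And>X. X \<in> \<T> \<Longrightarrow> a \<in> X \<Longrightarrow> b \<in> X \<Longrightarrow> gsharp N g X = s"
  proof -
    fix X assume X: "X \<in> \<T>" "a \<in> X" "b \<in> X"
    have "gsharp N g X = gsharp N g (bse N g X)" using bse_basic[of X g N] I1[OF X(1)] by auto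
    also have "\<dots> = gsharp N g (bse N g T)" using bseP[OF X] ab by simp
    also have "\<dots> = s" using bse_basic[of T g N] I1[OF T] s_def by auto
    finally show "gsharp N g X = s" .
  qed
  have old: "finite X \<and> 2 \<le> card X \<and> \<not> affine_dependent X \<and> inj_on g' X
        \<and> (\<forall>v\<in>X. g' v < gsharp N g' X)" if X: "X \<in> \<T>" for X
  proof -
    have eq: "\<And>x. x \<in> X \<Longrightarrow> g' x = g x" using fresh[OF X] g'_def by auto
    have "bse N g' X = bse N g X \<and> gsharp N g' X = gsharp N g X"
      using I1[OF X] eq by (intro bse_gsharp_cong) auto
    moreover have "inj_on g' X" using I1[OF X] eq inj_on_cong by blast
    ultimately show ?thesis using I1[OF X] eq by auto
  qed
  have child: "finite X \<and> 2 \<le> card X \<and> \<not> affine_dependent X \<and> inj_on g' X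
        \<and> (\<forall>v\<in>X. g' v < gsharp N g' X)"
    if X: "T' \<in> \<T>" "a \<in> T'" "b \<in> T'" "(r = a \<and> q = b) \<or> (r = b \<and> q = a)"
      "X = insert m (T' - {r})" for X T' r q
  proof -
    have rb: "r \<in> bse N g T'" using bseP[OF X(1-3)] X(4) by auto
    have g'e: "g' = g(m := gsharp N g T')" using gsP[OF X(1-3)] g'_def by simp
    have c: "finite X \<and> 2 \<le> card X \<and> inj_on g' X \<and> (\<forall>v\<in>X. g' v < gsharp N g' X)"
      using child_comb[OF N _ _ _ _ rb fresh[OF X(1)] g'e X(5)] I1[OF X(1)] by blast
    have mrq: "m = midpoint r q" using X(4) m_def midpoint_sym by metis
    have "\<not> affine_dependent X"
      using child_indep[OF _ _ _ _ _ fresh[OF X(1)] mrq] I1[OF X(1)] X ab(2) by auto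
    then show ?thesis using c by blast
  qed
  have P1': "\<forall>X\<in>bisect_all \<T> a b. finite X \<and> 2 \<le> card X \<and> \<not> affine_dependent X \<and> inj_on g' X
        \<and> (\<forall>v\<in>X. g' v < gsharp N g' X)"
  proof
    fix X assume "X \<in> bisect_all \<T> a b"
    from bisect_all_cases[OF this] show "finite X \<and> 2 \<le> card X \<and> \<not> affine_dependent X \<and> inj_on g' X
        \<and> (\<forall>v\<in>X. g' v < gsharp N g' X)"
      using old child m_def by blast
  qed
  have co: "convex hull X \<inter> convex hull Y \<subseteq> convex hull (X \<inter> Y)"
    if X: "T1 \<in> \<T>" "a \<in> T1" "b \<in> T1" "(r = a \<and> q = b) \<or> (r = b \<and> q = a)"
      "X = insert m (T1 - {r})" and Y: "Y \<in> \<T>" "\<not> (a \<in> Y \<and> b \<in> Y)" for X Y T1 r q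
  proof -
    have mrq: "m = midpoint r q" using X(4) m_def midpoint_sym by metis
    show ?thesis unfolding X(5)
      by (rule chi_child_old[OF _ _ _ I2[OF X(1) Y(1)] _ _ _ fresh[OF X(1)] mrq])
        (use I1[OF X(1)] I1[OF Y(1)] X Y ab(2) in auto)
  qed
  have cc: "convex hull X \<inter> convex hull Y \<subseteq> convex hull (X \<inter> Y)"
    if X: "T1 \<in> \<T>" "a \<in> T1" "b \<in> T1" "(r = a \<and> q = b) \<or> (r = b \<and> q = a)"
      "X = insert m (T1 - {r})"
    and Y: "T2 \<in> \<T>" "a \<in> T2" "b \<in> T2" "(r2 = a \<and> q2 = b) \<or> (r2 = b \<and> q2 = a)"
      "Y = insert m (T2 - {r2})" for X Y T1 r q T2 r2 q2
  proof -
    have mrq: "m = midpoint r q" using X(4) m_def midpoint_sym by metis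
    show ?thesis unfolding X(5) Y(5)
      by (rule chi_child_child[OF _ _ _ _ I2[OF X(1) Y(1)] _ _ _ _ _ fresh[OF X(1)] fresh[OF Y(1)] mrq])
        (use I1[OF X(1)] I1[OF Y(1)] X Y ab(2) in auto)
  qed
  have P2': "\<forall>X\<in>bisect_all \<T> a b. \<forall>Y\<in>bisect_all \<T> a b. convex hull X \<inter> convex hull Y \<subseteq> convex hull (X \<inter> Y)"
  proof (intro ballI)
    fix X Y assume XY: "X \<in> bisect_all \<T> a b" "Y \<in> bisect_all \<T> a b"
    note cX = bisect_all_cases[OF XY(1), folded m_def]
    note cY = bisect_all_cases[OF XY(2), folded m_def]
    show "convex hull X \<inter> convex hull Y \<subseteq> convex hull (X \<inter> Y)"
    proof (cases "X \<in> \<T> \<and> \<not> (a \<in> X \<and> b \<in> X)")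
      case Xo: True
      show ?thesis
      proof (cases "Y \<in> \<T> \<and> \<not> (a \<in> Y \<and> b \<in> Y)")
        case True then show ?thesis using I2 Xo by blast
      next
        case False
        then obtain T2 r q where "T2 \<in> \<T>" "a \<in> T2" "b \<in> T2" "(r = a \<and> q = b) \<or> (r = b \<and> q = a)"
          "Y = insert m (T2 - {r})" using cY by blast
        from co[OF this Xo[THEN conjunct1] Xo[THEN conjunct2]] show ?thesis by (simp add: Int_commute)
      qed
    next
      case False
      then obtain T1 r q where X: "T1 \<in> \<T>" "a \<in> T1" "b \<in> T1" "(r = a \<and> q = b) \<or> (r = b \<and> q = a)"
          "X = insert m (T1 - {r})" using cX by blast
      show ?thesis
      proof (cases "Y \<in> \<T> \<and> \<not> (a \<in> Y \<and> b \<in> Y)")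
        case True then show ?thesis using co[OF X] by blast
      next
        case False
        then obtain T2 r2 q2 where "T2 \<in> \<T>" "a \<in> T2" "b \<in> T2" "(r2 = a \<and> q2 = b) \<or> (r2 = b \<and> q2 = a)"
          "Y = insert m (T2 - {r2})" using cY by blast
        from cc[OF X this] show ?thesis .
      qed
    qed
  qed
  show ?thesis unfolding inv_st_def using P1' P2' m_def s_def g'_def by simp
qed


lemma refines_inv:
  fixes s :: "'a::euclidean_space set set \<times> ('a \<Rightarrow> int)"
  assumes "refines N s T s'" "0 < N"
  shows "inv_st N s \<Longrightarrow> inv_st N s'"
  using assms(1)
proof (induction rule: refines.induct)
  case (bisect T \<T> g a b)
  then show ?case using bisect_inv[OF assms(2)] by blast
next
  case (recurse T \<T> g T' s1 s2)
  then show ?case by blast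
qed

lemma reachable_inv:
  fixes \<T>0 :: "'a::euclidean_space set set"
  assumes "reachable N \<T>0 c s" "colored_triangulation N \<T>0 c" "0 < N"
  shows "inv_st N s"
  using assms(1)
proof (induction rule: reachable.induct)
  case init
  have C: "conforming_triangulation \<T>0" "\<forall>v\<in>\<Union>\<T>0. c v \<le> N" "\<forall>T\<in>\<T>0. inj_on c T"
    using assms(2) unfolding colored_triangulation_def by auto
  have C1: "\<forall>T\<in>\<T>0. finite T \<and> card T = DIM('a) + 1 \<and> \<not> affine_dependent T"
    "\<forall>T1\<in>\<T>0. \<forall>T2\<in>\<T>0. convex hull T1 \<inter> convex hull T2 = convex hull (T1 \<inter> T2)"
    using C(1) unfolding conforming_triangulation_def by auto
  define g0 where "g0 = (\<lambda>v. - int (c v))"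
  have T: "finite T \<and> 2 \<le> card T \<and> \<not> affine_dependent T \<and> inj_on g0 T \<and> (\<forall>v\<in>T. g0 v < gsharp N g0 T)"
    if T: "T \<in> \<T>0" for T
  proof -
    have f: "finite T" "2 \<le> card T" "\<not> affine_dependent T" using C1(1) T DIM_positive[where 'a='a] by auto
    have inj: "inj_on g0 T" using C(3) T unfolding g0_def inj_on_def by auto
    have "\<forall>v\<in>T. - int N \<le> g0 v \<and> g0 v \<le> 0" using C(2) T unfolding g0_def by auto
    then show ?thesis using init_J[OF assms(3) f(1) inj f(2)] f inj by blast
  qed
  show ?case unfolding inv_st_def g0_def[symmetric] using T C1(2) by auto
next
  case (step \<T> g T s)
  then show ?case using refines_inv[OF _ assms(3)] by blast
qed

theorem lemma3p8:
  fixes \<T>0 :: "'a::euclidean_space set set" and c :: "'a \<Rightarrow> nat" and N :: nat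
  assumes "DIM('a) \<ge> 2" and "N \<ge> DIM('a)"
    and "colored_triangulation N \<T>0 c"
    and "reachable N \<T>0 c (\<T>, g)" and "T \<in> \<T>"
  shows "(\<forall>e. e \<subseteq> T \<and> card e = 2 \<and> e \<noteq> bse N g T
              \<longrightarrow> gsharp N g e > gsharp N g (bse N g T))
       \<and> (\<forall>S e. S \<subseteq> T \<and> card S \<ge> 2 \<and> e \<subseteq> S \<and> card e = 2 \<and> e \<noteq> bse N g S
              \<longrightarrow> gsharp N g e > gsharp N g (bse N g S))"
proof -
  have N: "0 < N" using assms(1,2) by linarith
  have I: "inv_st N (\<T>, g)" by (rule reachable_inv[OF assms(4,3) N])
  then have T: "finite T" "2 \<le> card T" "inj_on g T" using assms(5) unfolding inv_st_def by auto
  have p1: "\<forall>e. e \<subseteq> T \<and> card e = 2 \<and> e \<noteq> bse N g T \<longrightarrow> gsharp N g e > gsharp N g (bse N g T)"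
    using P1[OF T(1,3,2) N] by blast
  have p2: "gsharp N g e > gsharp N g (bse N g S)"
    if "S \<subseteq> T" "card S \<ge> 2" "e \<subseteq> S" "card e = 2" "e \<noteq> bse N g S" for S e
  proof -
    have "finite S" "inj_on g S" using that(1) T(1,3) finite_subset inj_on_subset by auto
    then show ?thesis using P1[OF _ _ that(2) N that(3-5)] by blast
  qed
  show ?thesis using p1 p2 by blast
qed

end
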